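(* Work in Scenario 2 with a common prior, and assume that each $v_i$ has a density on $[\underline v_i,\bar v_i]$ and that for each $i$ the map $g_i(v)=v-\sum_{j\ne i}\mathbb E[\eta_{j\leftarrow i}\mid v_i=v]$ is non-decreasing on $[\underline v_i,\bar v_i]$. Let $\tau_i=\inf\{v\in[\underline v_i,\bar v_i]:g_i(v)\ge0\}$ (with $\inf\emptyset:=\bar v_i$). Define the mechanism: for $\mathbf t\in T$, $x_i(\mathbf t)=\mathbf 1\{g_i(v_i)\ge 0\}$; when bidder $i$ abstains, $x_i=p_i=0$ and $x_j(\emptyset,\mathbf t_{-i})=\mathbf 1\{v_j\ge\sum_{k\in N\setminus\{i,j\}}\mathbb E[\eta_{k\leftarrow j}\mid v_j]\}$ for $j\neq i$; and $$p_i(\mathbf t)=\tau_i\,x_i(\mathbf t)-\sum_{j\ne i}\mathbb E\big[\eta_{i\leftarrow j}\,x_j(\mathbf t)\big]-C_i,$$ where the expectation is over $t_j\sim F_j$ (so it is a constant), and $C_i$ is a constant with $C_i\ge c_i^\emptyset:=-\sum_{j\ne i}\mathbb E\big[\eta_{i\leftarrow j}\,x_j(\emptyset,\mathbf t_{-i})\big]$. Then: (a) this mechanism (with payments allowed to be real numbers) is BNIC and interim IR, and for $C_i=c_i^\emptyset$ all payments are nonnegative; (b) for every BNIC mechanism $(\mathbf x',\mathbf p')$, $\mathbb E[\mathrm{SW}(\mathbf x'(\mathbf t);\mathbf t)]\le\mathbb E[\mathrm{SW}(\mathbf x(\mathbf t);\mathbf t)]$, where $\mathrm{SW}(\mathbf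 z;\mathbf t)=\sum_{i\in N}\nu_i(\mathbf z)=\sum_{i\in N}\big(v_i-\sum_{j\ne i}\eta_{j\leftarrow i}\big)z_i$.
   Context: Model: there are $n$ bidders $N=\{1,\dots,n\}$ and a seller of a freely replicable good; an allocation is any $\mathbf x\in[0,1]^n$. Bidder $i$ has value $v_i\in[\underline v_i,\bar v_i]\subset\mathbb R_{\ge0}$ and for $j\ne i$ parameters $\eta_{i\leftarrow j}\in[\underline\eta_{i\leftarrow j},\bar\eta_{i\leftarrow j}]\subset\mathbb R_{\ge0}$; valuation $\nu_i(\mathbf x)=v_ix_i-\sum_{j\ne i}\eta_{i\leftarrow j}x_j$, utility $\nu_i(\mathbf x)-p_i$. In Scenario 2, bidder $i$'s private type is $t_i=(v_i,(\eta_{j\leftarrow i})_{j\ne i})\in T_i=[\underline v_i,\bar v_i]\times\prod_{j\ne i}[\underline\eta_{j\leftarrow i},\bar\eta_{j\leftarrow i}]$ (she knows the externalities she exerts on others). Bids lie in $B_i=T_i\cup\{\emptyset\}$; a mechanism is $\mathbf x:B\to[0,1]^n$, $\mathbf p:B\to\mathbb R^n_{\ge0}$ with $x_i=p_i=0$ when $i$ bids $\emptyset$, specified on profiles with at most one $\emptyset$. Common prior: types $t_i\sim F_i$ are independent across bidders. Interim utility: $V_i(\hat t_i;t_i)=\mathbb E[u_i(\mathbf x(\hat t_i,\mathbf t_{-i}),p_i(\hat t_i,\mathbf t_{-i});\mathbf t)\mid t_i]$ with $\mathbf t_{-i}\sim\prod_{j\ne i}F_j$ (others truthful), for $\hat t_i\in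 B_i$. BNIC: $V_i(t_i;t_i)\ge V_i(\hat t_i;t_i)$ for all $i$ and $t_i,\hat t_i\in T_i$. Interim IR: $V_i(t_i;t_i)\ge V_i(\emptyset;t_i)$ for all $i,t_i$. *)

theory Defs
  imports "HOL-Probability.Probability"
begin

text \<open>A type of bidder i is a vector
  t :: real^'n with t$i = v_i (own value) and t$j = eta_{j<-i} for j ~= i
  (the externality bidder i exerts on bidder j).  A bid is an option:
  None is the abstention bid (the empty bid), Some t a reported type.\<close>

type_synonym 'n btype = "real ^ 'n"
type_synonym 'n bid = "'n btype option"
type_synonym 'n mech = "('n \<Rightarrow> 'n bid) \<Rightarrow> 'n \<Rightarrow> real"

definition Tset :: "('n::finite \<Rightarrow> real) \<Rightarrow> ('n \<Rightarrow> real) \<Rightarrow> ('n \<Rightarrow> 'n \<Rightarrow> real)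
    \<Rightarrow> ('n \<Rightarrow> 'n \<Rightarrow> real) \<Rightarrow> 'n \<Rightarrow> 'n btype set" where
  "Tset lv uv le ue i = {t. lv i \<le> t $ i \<and> t $ i \<le> uv i \<and>
      (\<forall>j. j \<noteq> i \<longrightarrow> le j i \<le> t $ j \<and> t $ j \<le> ue j i)}"

definition util :: "'n::finite \<Rightarrow> ('n \<Rightarrow> real) \<Rightarrow> ('n \<Rightarrow> real) \<Rightarrow> ('n \<Rightarrow> 'n btype) \<Rightarrow> real" where
  "util i z p t = (t i $ i) * z i - (\<Sum>j\<in>UNIV - {i}. (t j $ i) * z j) - p i"

definition SW :: "('n::finite \<Rightarrow> real) \<Rightarrow> ('n \<Rightarrow> 'n btype) \<Rightarrow> real" where
  "SW z t = (\<Sum>i\<in>UNIV. (t i $ i - (\<Sum>j\<in>UNIV - {i}. t i $ j)) * z i)"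

definition tprof :: "'n \<Rightarrow> 'a \<Rightarrow> ('n \<Rightarrow> 'a) \<Rightarrow> 'n \<Rightarrow> 'a" where
  "tprof i t s = (\<lambda>j. if j = i then t else s j)"

definition bprof :: "'n::finite \<Rightarrow> 'n bid \<Rightarrow> ('n \<Rightarrow> 'n btype) \<Rightarrow> 'n \<Rightarrow> 'n bid" where
  "bprof i b s = (\<lambda>j. if j = i then b else Some (s j))"

definition interim :: "('n::finite \<Rightarrow> 'n btype measure) \<Rightarrow> 'n mech \<Rightarrow> 'n mech
    \<Rightarrow> 'n \<Rightarrow> 'n bid \<Rightarrow> 'n btype \<Rightarrow> real" where
  "interim F x p i b t =
     (\<integral>s. util i (x (bprof i b s)) (p (bprof i b s)) (tprof i t s) \<partial>(PiM (UNIV - {i}) F))"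

definition BNIC :: "('n::finite \<Rightarrow> 'n btype measure) \<Rightarrow> ('n \<Rightarrow> 'n btype set)
    \<Rightarrow> 'n mech \<Rightarrow> 'n mech \<Rightarrow> bool" where
  "BNIC F T x p \<longleftrightarrow> (\<forall>i t th. t \<in> T i \<longrightarrow> th \<in> T i \<longrightarrow>
      interim F x p i (Some th) t \<le> interim F x p i (Some t) t)"

definition interimIR :: "('n::finite \<Rightarrow> 'n btype measure) \<Rightarrow> ('n \<Rightarrow> 'n btype set)
    \<Rightarrow> 'n mech \<Rightarrow> 'n mech \<Rightarrow> bool" where
  "interimIR F T x p \<longleftrightarrow> (\<forall>i t. t \<in> T i \<longrightarrow>
      interim F x p i None t \<le> interim F x p i (Some t) t)"

definition is_mechanism :: "('n::finite) mech \<Rightarrow> 'n mech \<Rightarrow> bool" where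
  "is_mechanism x p \<longleftrightarrow> (\<forall>b i. 0 \<le> x b i \<and> x b i \<le> 1 \<and> 0 \<le> p b i \<and>
      (b i = None \<longrightarrow> x b i = 0 \<and> p b i = 0))"

definition regular_mech :: "('n::finite \<Rightarrow> 'n btype measure) \<Rightarrow> 'n mech \<Rightarrow> 'n mech \<Rightarrow> bool" where
  "regular_mech F x p \<longleftrightarrow>
     (\<forall>i. (\<lambda>t. x (\<lambda>j. Some (t j)) i) \<in> borel_measurable (PiM UNIV F)) \<and>
     (\<forall>i b j. (\<lambda>s. x (bprof i b s) j) \<in> borel_measurable (PiM (UNIV - {i}) F)) \<and>
     (\<forall>i b. integrable (PiM (UNIV - {i}) F) (\<lambda>s. p (bprof i b s) i))"

text \<open>m i j v is (a version of) E[eta_{j<-i} | v_i = v], i.e. E[t_i $ j | t_i $ i = v].\<close>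
definition cond_exp_version :: "('n::finite) btype measure \<Rightarrow> 'n \<Rightarrow> 'n \<Rightarrow> (real \<Rightarrow> real) \<Rightarrow> bool" where
  "cond_exp_version M i j f \<longleftrightarrow> f \<in> borel_measurable borel \<and>
     integrable M (\<lambda>t. f (t $ i)) \<and>
     (\<forall>A\<in>sets borel. (\<integral>t. indicator A (t $ i) * (t $ j) \<partial>M) =
                     (\<integral>t. indicator A (t $ i) * f (t $ i) \<partial>M))"

definition gfun :: "('n::finite \<Rightarrow> 'n \<Rightarrow> real \<Rightarrow> real) \<Rightarrow> 'n \<Rightarrow> real \<Rightarrow> real" where
  "gfun m i v = v - (\<Sum>j\<in>UNIV - {i}. m i j v)"

definition tau :: "('n::finite \<Rightarrow> 'n \<Rightarrow> real \<Rightarrow> real) \<Rightarrow> ('n \<Rightarrow> real) \<Rightarrow> ('n \<Rightarrow> real) \<Rightarrow> 'n \<Rightarrow> real" where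
  "tau m lv uv i = (let S = {v. lv i \<le> v \<and> v \<le> uv i \<and> 0 \<le> gfun m i v} in
                    if S = {} then uv i else Inf S)"

definition xabs :: "('n::finite \<Rightarrow> 'n \<Rightarrow> real \<Rightarrow> real) \<Rightarrow> 'n \<Rightarrow> 'n \<Rightarrow> real \<Rightarrow> real" where
  "xabs m i j v = (if (\<Sum>k\<in>UNIV - {i, j}. m j k v) \<le> v then 1 else 0)"

definition xopt :: "('n::finite \<Rightarrow> 'n \<Rightarrow> real \<Rightarrow> real) \<Rightarrow> 'n mech" where
  "xopt m b j =
     (case b j of None \<Rightarrow> 0
      | Some tj \<Rightarrow> if (\<exists>i. b i = None) then xabs m (SOME i. b i = None) j (tj $ j)
                  else (if 0 \<le> gfun m j (tj $ j) then 1 else 0))"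

definition Kconst :: "('n::finite \<Rightarrow> 'n btype measure) \<Rightarrow> ('n \<Rightarrow> 'n \<Rightarrow> real \<Rightarrow> real) \<Rightarrow> 'n \<Rightarrow> real" where
  "Kconst F m i = (\<Sum>j\<in>UNIV - {i}.
      \<integral>tj. (tj $ i) * (if 0 \<le> gfun m j (tj $ j) then 1 else 0) \<partial>F j)"

definition cempty :: "('n::finite \<Rightarrow> 'n btype measure) \<Rightarrow> ('n \<Rightarrow> 'n \<Rightarrow> real \<Rightarrow> real) \<Rightarrow> 'n \<Rightarrow> real" where
  "cempty F m i = - (\<Sum>j\<in>UNIV - {i}. \<integral>tj. (tj $ i) * xabs m i j (tj $ j) \<partial>F j)"

definition popt :: "('n::finite \<Rightarrow> 'n btype measure) \<Rightarrow> ('n \<Rightarrow> 'n \<Rightarrow> real \<Rightarrow> real)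
    \<Rightarrow> ('n \<Rightarrow> real) \<Rightarrow> ('n \<Rightarrow> real) \<Rightarrow> ('n \<Rightarrow> real) \<Rightarrow> 'n mech" where
  "popt F m lv uv C b i =
     (case b i of None \<Rightarrow> 0
      | Some ti \<Rightarrow> tau m lv uv i * xopt m b i - Kconst F m i - C i)"

end

theory Submission
  imports Defs
begin


definition gi :: "('n::finite \<Rightarrow> 'n \<Rightarrow> real \<Rightarrow> real) \<Rightarrow> 'n \<Rightarrow> real \<Rightarrow> real" where
  "gi m j v = (if 0 \<le> gfun m j v then 1 else 0)"

lemma bounded_integrable:
  fixes f :: "'a \<Rightarrow> real"
  assumes "prob_space M" "f \<in> borel_measurable M" "AE x in M. \<bar>f x\<bar> \<le> B"
  shows "integrable M f"
proof -
  interpret prob_space M by fact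
  show ?thesis using assms(2,3) by (intro integrable_const_bound[where B=B]) auto
qed

locale mt =
  fixes F :: "'n::finite \<Rightarrow> (real ^ 'n) measure"
    and lv uv :: "'n \<Rightarrow> real"
    and le ue :: "'n \<Rightarrow> 'n \<Rightarrow> real"
    and m :: "'n \<Rightarrow> 'n \<Rightarrow> real \<Rightarrow> real"
  assumes bounds_v: "\<And>i. 0 \<le> lv i \<and> lv i \<le> uv i"
    and bounds_eta: "\<And>i j. 0 \<le> le i j \<and> le i j \<le> ue i j"
    and prob: "\<And>i. prob_space (F i)"
    and sets_F[measurable_cong]: "\<And>i. sets (F i) = sets borel"
    and support: "\<And>i. AE t in F i. t \<in> Tset lv uv le ue i"
    and condexp: "\<And>i j. j \<noteq> i \<Longrightarrow> cond_exp_version (F i) i j (m i j)"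
begin

abbreviation "T \<equiv> Tset lv uv le ue"

lemma space_F[simp]: "space (F i) = UNIV"
  using sets_eq_imp_space_eq[OF sets_F[of i]] by simp

lemma prob_Pi: "prob_space (PiM I F)"
  by (rule prob_space_PiM) (rule prob)

lemma m_meas[measurable]: "k \<noteq> j \<Longrightarrow> m j k \<in> borel_measurable borel"
  using condexp[of k j] by (simp add: cond_exp_version_def)

lemma gfun_meas[measurable]: "gfun m j \<in> borel_measurable borel"
proof -
  have "(\<lambda>v. \<Sum>k\<in>UNIV-{j}. m j k v) \<in> borel_measurable borel"
    by (rule borel_measurable_sum) (auto intro: m_meas)
  then show ?thesis unfolding gfun_def by measurable
qed

lemma gi_meas[measurable]: "gi m j \<in> borel_measurable borel"
  unfolding gi_def by measurable

lemma xabs_meas[measurable]: "j \<noteq> i \<Longrightarrow> xabs m i j \<in> borel_measurable borel"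
proof -
  assume "j \<noteq> i"
  have "(\<lambda>v. \<Sum>k\<in>UNIV-{i,j}. m j k v) \<in> borel_measurable borel"
    by (rule borel_measurable_sum) (auto intro: m_meas)
  then show ?thesis unfolding xabs_def by measurable
qed

lemma coord_bound: "t \<in> T j \<Longrightarrow> \<bar>t $ k\<bar> \<le> uv j + ue k j"
  using bounds_v[of j] bounds_eta[of k j]
  by (cases "k = j") (auto simp: Tset_def)

lemma coord_nonneg: "t \<in> T j \<Longrightarrow> 0 \<le> t $ k"
  using bounds_v[of j] bounds_eta[of k j]
  by (cases "k = j") (auto simp: Tset_def)

lemma comp_int:
  fixes f :: "real^'n \<Rightarrow> real"
  assumes "j \<in> I" "f \<in> borel_measurable borel"
  shows "(\<integral>s. f (s j) \<partial>PiM I F) = integral\<^sup>L (F j) f"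
proof -
  have [measurable]: "f \<in> borel_measurable (F j)" using assms(2) by simp
  have "(\<integral>s. f (s j) \<partial>PiM I F) = integral\<^sup>L (distr (PiM I F) (F j) (\<lambda>s. s j)) f"
    by (rule integral_distr[symmetric]) (use assms measurable_component_singleton[OF assms(1), of F] in auto)
  also have "distr (PiM I F) (F j) (\<lambda>s. s j) = F j"
    by (rule distr_PiM_component) (auto intro: prob assms)
  finally show ?thesis .
qed

lemma comp_integrable:
  fixes f :: "real^'n \<Rightarrow> real"
  assumes "j \<in> I" "integrable (F j) f"
  shows "integrable (PiM I F) (\<lambda>s. f (s j))"
proof -
  have "integrable (distr (PiM I F) (F j) (\<lambda>s. s j)) f"
    using assms(2) by (subst distr_PiM_component) (auto intro: prob assms)
  then show ?thesis using integrable_distr_eq[OF measurable_component_singleton[OF assms(1), of F], of f] assms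
    by auto
qed

lemma comp_AE: "j \<in> I \<Longrightarrow> AE t in F j. P t \<Longrightarrow> AE s in PiM I F. P (s j)"
  by (rule AE_PiM_component) (auto intro: prob)

lemma int_coord_gi: "integrable (F j) (\<lambda>a. a $ i * g (a $ j))"
  if [measurable]: "g \<in> borel_measurable borel" "\<And>v. \<bar>g v\<bar> \<le> 1"
proof (rule bounded_integrable[OF prob, where B="uv j + ue i j"])
  show "(\<lambda>a. a $ i * g (a $ j)) \<in> borel_measurable (F j)" by measurable
  show "AE x in F j. \<bar>x $ i * g (x $ j)\<bar> \<le> uv j + ue i j"
    using support[of j]
  proof eventually_elim
    case (elim x)
    have "\<bar>x $ i * g (x $ j)\<bar> = \<bar>x $ i\<bar> * \<bar>g (x $ j)\<bar>" by (simp add: abs_mult)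
    also have "\<dots> \<le> \<bar>x $ i\<bar> * 1" using that(2) by (intro mult_left_mono) auto
    also have "\<dots> \<le> uv j + ue i j" using coord_bound[OF elim] by simp
    finally show ?case .
  qed
qed

lemma gi_bound: "\<bar>gi m j v\<bar> \<le> 1" by (simp add: gi_def)
lemma xabs_bound: "\<bar>xabs m i j v\<bar> \<le> 1" by (simp add: xabs_def)

lemma interim_opt_some:
  "interim F (xopt m) (popt F m lv uv C) i (Some th) t = (t$i - tau m lv uv i) * gi m i (th$i) + C i"
proof -
  let ?I = "UNIV - {i}"
  define f where "f j a = a $ i * gi m j (a $ j)" for j a
  have eq: "util i (xopt m (bprof i (Some th) s)) (popt F m lv uv C (bprof i (Some th) s)) (tprof i t s)
     = ((t$i - tau m lv uv i) * gi m i (th$i) + C i + Kconst F m i) - (\<Sum>j\<in>?I. f j (s j))" for s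
  proof -
    have nn: "\<not> (\<exists>k. bprof i (Some th) s k = None)" by (simp add: bprof_def)
    have x: "xopt m (bprof i (Some th) s) j = gi m j ((if j = i then th else s j) $ j)" for j
      using nn by (auto simp add: xopt_def bprof_def gi_def)
    have "(\<Sum>j\<in>?I. tprof i t s j $ i * xopt m (bprof i (Some th) s) j) = (\<Sum>j\<in>?I. f j (s j))"
      by (rule sum.cong) (auto simp: x f_def tprof_def)
    moreover have "xopt m (bprof i (Some th) s) i = gi m i (th $ i)" using x[of i] by simp
    moreover have "bprof i (Some th) s i = Some th" by (simp add: bprof_def)
    ultimately show ?thesis
      by (simp add: util_def popt_def tprof_def algebra_simps)
  qed
  have int: "j \<in> ?I \<Longrightarrow> integrable (PiM ?I F) (\<lambda>s. f j (s j))" for j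
    unfolding f_def by (rule comp_integrable) (auto intro!: int_coord_gi gi_bound)
  have "interim F (xopt m) (popt F m lv uv C) i (Some th) t
     = (\<integral>s. ((t$i - tau m lv uv i) * gi m i (th$i) + C i + Kconst F m i) - (\<Sum>j\<in>?I. f j (s j)) \<partial>PiM ?I F)"
    unfolding interim_def eq ..
  also have "\<dots> = ((t$i - tau m lv uv i) * gi m i (th$i) + C i + Kconst F m i) - (\<Sum>j\<in>?I. \<integral>s. f j (s j) \<partial>PiM ?I F)"
  proof -
    interpret P: prob_space "PiM ?I F" by (rule prob_Pi)
    have "integrable (PiM ?I F) (\<lambda>s. \<Sum>j\<in>?I. f j (s j))" 
      using int by (rule Bochner_Integration.integrable_sum[where f="\<lambda>j s. f j (s j)"])
    then have "(\<integral>s. c - (\<Sum>j\<in>?I. f j (s j)) \<partial>PiM ?I F) = c - (\<integral>s. (\<Sum>j\<in>?I. f j (s j)) \<partial>PiM ?I F)" for c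
    proof -
      assume a: "integrable (PiM ?I F) (\<lambda>s. \<Sum>j\<in>?I. f j (s j))"
      have "(\<integral>s. c - (\<Sum>j\<in>?I. f j (s j)) \<partial>PiM ?I F) = (\<integral>s. c \<partial>PiM ?I F) - (\<integral>s. (\<Sum>j\<in>?I. f j (s j)) \<partial>PiM ?I F)"
        by (rule Bochner_Integration.integral_diff) (auto intro: a)
      then show ?thesis by (simp add: P.prob_space)
    qed
    moreover have "(\<integral>s. (\<Sum>j\<in>?I. f j (s j)) \<partial>PiM ?I F) = (\<Sum>j\<in>?I. \<integral>s. f j (s j) \<partial>PiM ?I F)"
      using int by (rule Bochner_Integration.integral_sum[where f="\<lambda>j s. f j (s j)"])
    ultimately show ?thesis by simp
  qed
  also have "(\<Sum>j\<in>?I. \<integral>s. f j (s j) \<partial>PiM ?I F) = Kconst F m i"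
    unfolding Kconst_def
  proof (rule sum.cong[OF refl])
    fix j assume "j \<in> ?I"
    have fe: "f j = (\<lambda>a. a$i * gi m j (a$j))" by (simp add: f_def fun_eq_iff)
    have "f j \<in> borel_measurable borel" unfolding fe by measurable
    then show "(\<integral>s. f j (s j) \<partial>PiM ?I F) = (\<integral>tj. tj $ i * (if 0 \<le> gfun m j (tj $ j) then 1 else 0) \<partial>F j)"
      using \<open>j \<in> ?I\<close> by (subst comp_int) (auto simp: fe gi_def)
  qed
  finally show ?thesis by simp
qed

lemma interim_opt_none:
  "interim F (xopt m) (popt F m lv uv C) i None t = cempty F m i"
proof -
  let ?I = "UNIV - {i}"
  define f where "f j a = a $ i * xabs m i j (a $ j)" for j a
  have eq: "util i (xopt m (bprof i None s)) (popt F m lv uv C (bprof i None s)) (tprof i t s)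
     = 0 - (\<Sum>j\<in>?I. f j (s j))" for s
  proof -
    have sm: "(SOME k. bprof i None s k = None) = i"
      by (rule some_equality) (auto simp: bprof_def split: if_splits)
    have x: "j \<noteq> i \<Longrightarrow> xopt m (bprof i None s) j = xabs m i j (s j $ j)" for j
      using sm by (auto simp add: xopt_def bprof_def)
    have "(\<Sum>j\<in>?I. tprof i t s j $ i * xopt m (bprof i None s) j) = (\<Sum>j\<in>?I. f j (s j))"
      by (rule sum.cong) (auto simp: x f_def tprof_def)
    moreover have "xopt m (bprof i None s) i = 0" by (simp add: xopt_def bprof_def)
    moreover have "popt F m lv uv C (bprof i None s) i = 0" by (simp add: popt_def bprof_def)
    ultimately show ?thesis
      by (simp add: util_def tprof_def algebra_simps)
  qed
  have int: "j \<in> ?I \<Longrightarrow> integrable (PiM ?I F) (\<lambda>s. f j (s j))" for j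
    unfolding f_def by (rule comp_integrable) (auto intro!: int_coord_gi xabs_bound)
  interpret P: prob_space "PiM ?I F" by (rule prob_Pi)
  have "interim F (xopt m) (popt F m lv uv C) i None t
     = (\<integral>s. 0 - (\<Sum>j\<in>?I. f j (s j)) \<partial>PiM ?I F)"
    unfolding interim_def eq ..
  also have "\<dots> = - (\<Sum>j\<in>?I. \<integral>s. f j (s j) \<partial>PiM ?I F)"
    using int by (simp add: Bochner_Integration.integral_sum[where f="\<lambda>j s. f j (s j)"])
  also have "(\<Sum>j\<in>?I. \<integral>s. f j (s j) \<partial>PiM ?I F) = (\<Sum>j\<in>?I. \<integral>tj. (tj $ i) * xabs m i j (tj $ j) \<partial>F j)"
  proof (rule sum.cong[OF refl])
    fix j assume "j \<in> ?I"
    have fe: "f j = (\<lambda>a. a$i * xabs m i j (a$j))" by (simp add: f_def fun_eq_iff)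
    have [measurable]: "xabs m i j \<in> borel_measurable borel" using \<open>j \<in> ?I\<close> by (intro xabs_meas) auto
    have "f j \<in> borel_measurable borel" unfolding fe by measurable
    then show "(\<integral>s. f j (s j) \<partial>PiM ?I F) = (\<integral>tj. tj $ i * xabs m i j (tj $ j) \<partial>F j)"
      using \<open>j \<in> ?I\<close> by (subst comp_int) (auto simp: fe)
  qed
  finally show ?thesis by (simp add: cempty_def)
qed

lemma tau_ge: "lv i \<le> tau m lv uv i"
  using bounds_v[of i] unfolding tau_def Let_def
  by (auto intro!: cInf_greatest)

lemma tau_prop:
  assumes mono: "mono_on {lv i..uv i} (gfun m i)" and v: "lv i \<le> v" "v \<le> uv i"
  shows "(v - tau m lv uv i) * gi m i v = max 0 (v - tau m lv uv i)"
proof -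
  define S where "S = {v. lv i \<le> v \<and> v \<le> uv i \<and> 0 \<le> gfun m i v}"
  have bdd: "bdd_below S" unfolding S_def by (auto intro: bdd_belowI[where m="lv i"])
  have tS: "tau m lv uv i = (if S = {} then uv i else Inf S)" unfolding tau_def Let_def S_def by (rule refl)
  show ?thesis
  proof (cases "0 \<le> gfun m i v")
    case True
    then have "v \<in> S" using v by (simp add: S_def)
    then have "tau m lv uv i \<le> v" using tS bdd by (auto intro: cInf_lower)
    then show ?thesis using True by (simp add: gi_def)
  next
    case False
    have "v \<le> tau m lv uv i"
    proof (cases "S = {}")
      case True then show ?thesis using tS v by simp
    next
      case ne: False
      show ?thesis
      proof (rule ccontr)
        assume "\<not> v \<le> tau m lv uv i"
        then have "Inf S < v" using tS ne by simp
        then obtain s where s: "s \<in> S" "s < v" using cInf_lessD[OF ne] by blast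
        then have "gfun m i s \<le> gfun m i v" using mono v unfolding S_def
          by (intro mono_onD[OF mono]) auto
        with s False show False by (simp add: S_def)
      qed
    qed
    then show ?thesis using False by (simp add: gi_def)
  qed
qed

lemma m_nonneg: assumes "k \<noteq> j" shows "AE a in F j. 0 \<le> m j k (a $ j)"
proof -
  define A where "A = {v. m j k v < 0}"
  have ce: "cond_exp_version (F j) j k (m j k)" using condexp assms by auto
  have [measurable]: "m j k \<in> borel_measurable borel" using assms by (rule m_meas)
  have Ab: "A \<in> sets borel" unfolding A_def by measurable
  have eq: "(\<integral>a. indicator A (a $ j) * (a $ k) \<partial>F j) = (\<integral>a. indicator A (a $ j) * m j k (a $ j) \<partial>F j)"
    using ce Ab by (simp add: cond_exp_version_def)
  have "0 \<le> (\<integral>a. indicator A (a $ j) * (a $ k) \<partial>F j)"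
  proof (rule integral_nonneg_AE)
    show "AE x in F j. 0 \<le> indicator A (x $ j) * x $ k"
      using support[of j] by eventually_elim (auto intro!: mult_nonneg_nonneg coord_nonneg[of _ j])
  qed
  moreover have "0 \<le> (\<integral>a. - (indicator A (a $ j) * m j k (a $ j)) \<partial>F j)"
    by (rule Bochner_Integration.integral_nonneg) (auto simp: A_def indicator_def)
  then have "(\<integral>a. indicator A (a $ j) * m j k (a $ j) \<partial>F j) \<le> 0" by simp
  ultimately have z: "(\<integral>a. - (indicator A (a $ j) * m j k (a $ j)) \<partial>F j) = 0" using eq by simp
  have intm: "integrable (F j) (\<lambda>a. m j k (a $ j))" using ce by (simp add: cond_exp_version_def)
  have int: "integrable (F j) (\<lambda>a. - (indicator A (a $ j) * m j k (a $ j)))"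
    by (rule Bochner_Integration.integrable_bound[OF intm]) (use Ab in \<open>auto simp: indicator_def\<close>)
  have "AE a in F j. - (indicator A (a $ j) * m j k (a $ j)) = 0"
    using integral_nonneg_eq_0_iff_AE[OF int] z by (auto simp: A_def indicator_def)
  then show ?thesis by eventually_elim (auto simp: A_def indicator_def split: if_splits)
qed

lemma pay_nonneg:
  assumes "\<forall>j. t j \<in> T j"
  shows "0 \<le> popt F m lv uv (cempty F m) (\<lambda>j. Some (t j)) i"
proof -
  let ?I = "UNIV - {i}"
  have x: "0 \<le> xopt m (\<lambda>j. Some (t j)) i" by (simp add: xopt_def)
  have tau: "0 \<le> tau m lv uv i" using tau_ge[of i] bounds_v[of i] by simp
  have "Kconst F m i \<le> (\<Sum>j\<in>?I. \<integral>tj. tj $ i * xabs m i j (tj $ j) \<partial>F j)"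
    unfolding Kconst_def
  proof (rule sum_mono)
    fix j assume j: "j \<in> ?I"
    have [measurable]: "xabs m i j \<in> borel_measurable borel" using j by (intro xabs_meas) auto
    show "(\<integral>tj. tj $ i * (if 0 \<le> gfun m j (tj $ j) then 1 else 0) \<partial>F j) \<le> (\<integral>tj. tj $ i * xabs m i j (tj $ j) \<partial>F j)"
    proof (rule integral_mono_AE)
      show "integrable (F j) (\<lambda>tj. tj $ i * (if 0 \<le> gfun m j (tj $ j) then 1 else 0))"
        using int_coord_gi[OF gi_meas gi_bound, of j i j] by (simp add: gi_def)
      show "integrable (F j) (\<lambda>tj. tj $ i * xabs m i j (tj $ j))"
        by (rule int_coord_gi) (auto intro: xabs_bound)
      have ij: "i \<noteq> j" using j by auto
      show "AE tj in F j. tj $ i * (if 0 \<le> gfun m j (tj $ j) then 1 else 0) \<le> tj $ i * xabs m i j (tj $ j)"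
        using support[of j] m_nonneg[OF ij]
      proof eventually_elim
        case (elim a)
        have s: "(\<Sum>k\<in>UNIV-{j}. m j k (a$j)) = m j i (a$j) + (\<Sum>k\<in>UNIV-{i,j}. m j k (a$j))"
        proof -
          have "UNIV - {j} = insert i (UNIV - {i,j})" using ij by auto
          then show ?thesis by (simp add: sum.insert)
        qed
        have "(if 0 \<le> gfun m j (a $ j) then 1 else 0) \<le> xabs m i j (a $ j)"
          using elim(2) s by (auto simp: gfun_def xabs_def)
        then show ?case using coord_nonneg[OF elim(1), of i] by (intro mult_left_mono) auto
      qed
    qed
  qed
  then show ?thesis using mult_nonneg_nonneg[OF tau x]
    by (simp add: popt_def cempty_def)
qed

lemma part_a:
  assumes mono: "\<And>i. mono_on {lv i..uv i} (gfun m i)" and C: "\<forall>i. cempty F m i \<le> C i"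
  shows "BNIC F T (xopt m) (popt F m lv uv C) \<and> interimIR F T (xopt m) (popt F m lv uv C)"
proof -
  have key: "interim F (xopt m) (popt F m lv uv C) i (Some t) t = max 0 (t$i - tau m lv uv i) + C i"
    if "t \<in> T i" for i t
    using that tau_prop[OF mono, of i "t$i"] by (simp add: interim_opt_some Tset_def)
  show ?thesis
    unfolding BNIC_def interimIR_def
  proof (intro conjI allI impI)
    fix i t th assume "t \<in> T i" "th \<in> T i"
    have "(t$i - tau m lv uv i) * gi m i (th$i) \<le> max 0 (t$i - tau m lv uv i)"
      by (simp add: gi_def)
    then show "interim F (xopt m) (popt F m lv uv C) i (Some th) t \<le> interim F (xopt m) (popt F m lv uv C) i (Some t) t"
      using key[OF \<open>t \<in> T i\<close>] by (simp add: interim_opt_some)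
  next
    fix i t assume "t \<in> T i"
    then show "interim F (xopt m) (popt F m lv uv C) i None t \<le> interim F (xopt m) (popt F m lv uv C) i (Some t) t"
      using key[OF \<open>t \<in> T i\<close>] C by (simp add: interim_opt_none) (smt (verit) )
  qed
qed

lemma coord_integrable: "integrable (F j) (\<lambda>a. a $ k)"
proof (rule bounded_integrable[OF prob, where B="uv j + ue k j"])
  show "(\<lambda>a. a $ k) \<in> borel_measurable (F j)" by measurable
  show "AE x in F j. \<bar>x $ k\<bar> \<le> uv j + ue k j"
    using support[of j] by eventually_elim (rule coord_bound)
qed

lemma cond_ext:
  assumes ik: "k \<noteq> i" and [measurable]: "\<phi> \<in> borel_measurable borel" and bd: "\<And>v. \<bar>\<phi> v\<bar> \<le> 1"
  shows "integrable (F i) (\<lambda>a. \<phi> (a $ i) * m i k (a $ i))"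
    "(\<integral>a. \<phi> (a $ i) * a $ k \<partial>F i) = (\<integral>a. \<phi> (a $ i) * m i k (a $ i) \<partial>F i)"
proof -
  define S where "S = vimage_algebra (space (F i)) (\<lambda>a. a $ i) (borel :: real measure)"
  have ce: "cond_exp_version (F i) i k (m i k)" using condexp ik by auto
  have [measurable]: "m i k \<in> borel_measurable borel" using ik by (rule m_meas)
  have intm: "integrable (F i) (\<lambda>a. m i k (a $ i))" using ce by (simp add: cond_exp_version_def)
  have mi: "(\<lambda>a. a $ i) \<in> measurable (F i) borel" by measurable
  have subalg: "subalgebra (F i) S"
    unfolding subalgebra_def S_def using sets_image_in_sets[OF refl mi] by simp
  have sfs: "sigma_finite_subalgebra (F i) S"
    by (rule sigma_finite_subalgebra.intro[OF subalg])
       (rule prob_space_imp_sigma_finite[OF prob_space_restr_to_subalg[OF subalg prob]])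
  interpret sigma_finite_subalgebra "F i" S by (rule sfs)
  have miS: "(\<lambda>a. a $ i) \<in> measurable S borel"
    unfolding S_def by (rule measurable_vimage_algebra1) simp
  have gS: "(\<lambda>a. m i k (a $ i)) \<in> borel_measurable S"
    using measurable_comp[OF miS, of "m i k" borel] by (simp add: comp_def)
  have phS: "(\<lambda>a. \<phi> (a $ i)) \<in> borel_measurable S"
    using measurable_comp[OF miS, of \<phi> borel] by (simp add: comp_def)
  have AE: "AE a in F i. real_cond_exp (F i) S (\<lambda>a. a $ k) a = m i k (a $ i)"
  proof (rule real_cond_exp_charact)
    fix A assume "A \<in> sets S"
    then obtain B where B: "B \<in> sets borel" "A = (\<lambda>a. a $ i) -` B \<inter> space (F i)"
      unfolding S_def by (subst (asm) sets_vimage_algebra2) auto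
    have ind: "indicator A x = indicator B (x $ i)" for x :: "real^'n"
      using B(2) by (auto simp: indicator_def)
    show "(\<integral>x \<in> A. x $ k \<partial>F i) = (\<integral>x \<in> A. m i k (x $ i) \<partial>F i)"
      using ce B(1) unfolding set_lebesgue_integral_def cond_exp_version_def by (simp add: ind)
  next
    show "integrable (F i) (\<lambda>a. a $ k)" by (rule coord_integrable)
    show "integrable (F i) (\<lambda>a. m i k (a $ i))" by (rule intm)
    show "(\<lambda>a. m i k (a $ i)) \<in> borel_measurable S" by (rule gS)
  qed
  show int2: "integrable (F i) (\<lambda>a. \<phi> (a $ i) * m i k (a $ i))"
    by (rule Bochner_Integration.integrable_bound[OF intm])
       (use bd in \<open>auto simp: abs_mult intro!: mult_left_le_one_le\<close>)
  have int1: "integrable (F i) (\<lambda>a. \<phi> (a $ i) * a $ k)"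
    by (rule Bochner_Integration.integrable_bound[OF coord_integrable[of i k]])
       (use bd in \<open>auto simp: abs_mult intro!: mult_left_le_one_le\<close>)
  have "(\<integral>a. \<phi> (a $ i) * a $ k \<partial>F i) = (\<integral>a. \<phi> (a $ i) * real_cond_exp (F i) S (\<lambda>a. a $ k) a \<partial>F i)"
    by (rule real_cond_exp_intg(2)[symmetric, OF int1 phS]) measurable
  also have "\<dots> = (\<integral>a. \<phi> (a $ i) * m i k (a $ i) \<partial>F i)"
    by (rule integral_cong_AE) (use AE in \<open>auto\<close>)
  finally show "(\<integral>a. \<phi> (a $ i) * a $ k \<partial>F i) = (\<integral>a. \<phi> (a $ i) * m i k (a $ i) \<partial>F i)" .
qed

lemma T_witness: "lv i \<le> v \<Longrightarrow> v \<le> uv i \<Longrightarrow> (\<chi> k. if k = i then v else le k i) \<in> T i"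
  using bounds_eta by (auto simp: Tset_def)

lemma ae_mono_fun:
  fixes X :: "real^'n \<Rightarrow> real"
  assumes dens: "distributed (F i) lborel (\<lambda>t. t$i) f"
    and X0: "\<And>a. 0 \<le> X a" and X1: "\<And>a. X a \<le> 1"
    and mono: "\<And>a b. a \<in> T i \<Longrightarrow> b \<in> T i \<Longrightarrow> a$i < b$i \<Longrightarrow> X a \<le> X b"
  shows "\<exists>\<phi>. \<phi> \<in> borel_measurable borel \<and> (\<forall>v. 0 \<le> \<phi> v \<and> \<phi> v \<le> 1) \<and> (AE a in F i. X a = \<phi> (a$i))"
proof -
  define L where "L v = insert 0 (X ` {b \<in> T i. b$i < v})" for v
  define U where "U v = insert 1 (X ` {b \<in> T i. v < b$i})" for v
  define \<phi> where "\<phi> v = Sup (L v)" for v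
  define \<psi> where "\<psi> v = Inf (U v)" for v
  have bL: "bdd_above (L v)" for v unfolding L_def using X1 by (auto intro!: bdd_aboveI[where M=1])
  have bU: "bdd_below (U v)" for v unfolding U_def using X0 by (auto intro!: bdd_belowI[where m=0])
  have monoL: "mono \<phi>"
    unfolding mono_def \<phi>_def by (intro allI impI cSup_subset_mono bL) (auto simp: L_def)
  have phi_meas: "\<phi> \<in> borel_measurable borel" by (rule borel_measurable_mono[OF monoL])
  have phi01: "0 \<le> \<phi> v \<and> \<phi> v \<le> 1" for v
  proof
    show "0 \<le> \<phi> v" unfolding \<phi>_def by (rule cSup_upper[OF _ bL]) (simp add: L_def)
    show "\<phi> v \<le> 1" unfolding \<phi>_def by (rule cSup_least) (auto simp: L_def X1)
  qed
  have phiX: "a \<in> T i \<Longrightarrow> \<phi> (a$i) \<le> X a" for a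
    unfolding \<phi>_def by (rule cSup_least) (auto simp: L_def X0 intro: mono)
  have Xpsi: "a \<in> T i \<Longrightarrow> X a \<le> \<psi> (a$i)" for a
    unfolding \<psi>_def by (rule cInf_greatest) (auto simp: U_def X1 intro: mono)
  have psiphi: "\<psi> v \<le> \<phi> w" if "lv i \<le> v" "v < w" "w \<le> uv i" for v w
  proof -
    define c where "c = (\<chi> k. if k = i then (v+w)/2 else le k i)"
    have c: "c \<in> T i" unfolding c_def by (rule T_witness) (use that in auto)
    have ci: "c $ i = (v+w)/2" by (simp add: c_def)
    have "\<psi> v \<le> X c" unfolding \<psi>_def by (rule cInf_lower[OF _ bU]) (use c ci that in \<open>auto simp: U_def\<close>)
    also have "X c \<le> \<phi> w" unfolding \<phi>_def by (rule cSup_upper[OF _ bL]) (use c ci that in \<open>auto simp: L_def\<close>)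
    finally show ?thesis .
  qed
  define D where "D = {v. lv i \<le> v \<and> v \<le> uv i \<and> \<phi> v < \<psi> v}"
  define r where "r v = (SOME q. q \<in> \<rat> \<and> \<phi> v < q \<and> q < \<psi> v)" for v
  have r: "v \<in> D \<Longrightarrow> r v \<in> \<rat> \<and> \<phi> v < r v \<and> r v < \<psi> v" for v
    unfolding r_def D_def by (rule someI_ex) (use Rats_dense_in_real in blast)
  have inj: "inj_on r D"
  proof (rule inj_onI)
    fix v w assume vw: "v \<in> D" "w \<in> D" "r v = r w"
    show "v = w"
    proof (rule ccontr)
      assume "v \<noteq> w"
      then consider "v < w" | "w < v" by linarith
      then show False
      proof cases
        case 1
        have "r v < \<psi> v" "\<phi> w < r w" using r[OF vw(1)] r[OF vw(2)] by auto
        moreover have "\<psi> v \<le> \<phi> w" using psiphi[OF _ 1] vw by (auto simp: D_def)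
        ultimately show False using vw by simp
      next
        case 2
        have "r w < \<psi> w" "\<phi> v < r v" using r[OF vw(1)] r[OF vw(2)] by auto
        moreover have "\<psi> w \<le> \<phi> v" using psiphi[OF _ 2] vw by (auto simp: D_def)
        ultimately show False using vw by simp
      qed
    qed
  qed
  have "countable (r ` D)" using r by (intro countable_subset[OF _ countable_rat]) auto
  then have cD: "countable D" using inj by (rule countable_image_inj_on)
  have Dnull: "D \<in> null_sets lborel" by (rule countable_imp_null_set_lborel[OF cD])
  have Dsets: "D \<in> sets borel" using Dnull by auto
  have fm: "f \<in> borel_measurable lborel" using dens by (simp add: distributed_def)
  have "emeasure (F i) ((\<lambda>t. t$i) -` D \<inter> space (F i)) = (\<integral>\<^sup>+x. f x * indicator D x \<partial>lborel)"
    by (rule distributed_emeasure[OF dens]) (use Dsets in simp)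
  also have "\<dots> = 0"
    using AE_not_in[OF Dnull] by (subst nn_integral_cong_AE[where v="\<lambda>_. 0"]) (auto elim!: eventually_mono)
  finally have "(\<lambda>t. t$i) -` D \<inter> space (F i) \<in> null_sets (F i)"
  proof -
    assume e: "emeasure (F i) ((\<lambda>t. t$i) -` D \<inter> space (F i)) = 0"
    have "(\<lambda>t. t$i) -` D \<inter> space (F i) \<in> sets (F i)"
    proof (rule measurable_sets[OF _ Dsets])
      show "(\<lambda>t. t$i) \<in> measurable (F i) borel" by measurable
    qed
    then show ?thesis using e by (intro null_setsI)
  qed
  then have AEn: "AE a in F i. a$i \<notin> D"
    by (rule AE_I') auto
  have "AE a in F i. X a = \<phi> (a$i)"
    using AEn support[of i]
  proof eventually_elim
    case (elim a)
    have "lv i \<le> a$i" "a$i \<le> uv i" using elim(2) by (auto simp: Tset_def)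
    then have "\<psi> (a$i) \<le> \<phi> (a$i)" using elim(1) by (auto simp: D_def)
    then show ?case using phiX[OF elim(2)] Xpsi[OF elim(2)] by simp
  qed
  then show ?thesis using phi_meas phi01 by blast
qed

definition hh :: "'n \<Rightarrow> real^'n \<Rightarrow> real" where
  "hh i a = a$i - (\<Sum>j\<in>UNIV-{i}. a$j)"

lemma hh_meas[measurable]: "hh i \<in> borel_measurable borel"
  unfolding hh_def by measurable

lemma hh_bound: "a \<in> T i \<Longrightarrow> \<bar>hh i a\<bar> \<le> (\<Sum>k\<in>UNIV. uv i + ue k i)"
proof -
  assume a: "a \<in> T i"
  have "\<bar>hh i a\<bar> \<le> \<bar>a$i\<bar> + \<bar>\<Sum>j\<in>UNIV-{i}. a$j\<bar>" unfolding hh_def by linarith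
  also have "\<dots> \<le> \<bar>a$i\<bar> + (\<Sum>j\<in>UNIV-{i}. \<bar>a$j\<bar>)" by (simp add: sum_abs)
  also have "\<dots> = (\<Sum>k\<in>UNIV. \<bar>a$k\<bar>)" by (simp add: sum.remove[of UNIV i])
  also have "\<dots> \<le> (\<Sum>k\<in>UNIV. uv i + ue k i)" by (rule sum_mono) (rule coord_bound[OF a])
  finally show ?thesis .
qed

lemma h_phi:
  assumes [measurable]: "\<phi> \<in> borel_measurable borel" and bd: "\<And>v. \<bar>\<phi> v\<bar> \<le> 1"
  shows "integrable (F i) (\<lambda>a. gfun m i (a$i) * \<phi> (a$i))"
    "(\<integral>a. hh i a * \<phi> (a$i) \<partial>F i) = (\<integral>a. gfun m i (a$i) * \<phi> (a$i) \<partial>F i)"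
proof -
  let ?I = "UNIV - {i}"
  have intc: "integrable (F i) (\<lambda>a. \<phi> (a$i) * a$k)" for k
    by (rule Bochner_Integration.integrable_bound[OF coord_integrable[of i k]])
       (use bd in \<open>auto simp: abs_mult intro!: mult_left_le_one_le\<close>)
  have intm: "k \<in> ?I \<Longrightarrow> integrable (F i) (\<lambda>a. \<phi> (a$i) * m i k (a$i))" for k
    using cond_ext(1)[of k i \<phi>] bd by auto
  have e1: "hh i a * \<phi> (a$i) = \<phi> (a$i) * a$i - (\<Sum>k\<in>?I. \<phi> (a$i) * a$k)" for a
    by (simp add: hh_def sum_distrib_left algebra_simps)
  have e2: "gfun m i (a$i) * \<phi> (a$i) = \<phi> (a$i) * a$i - (\<Sum>k\<in>?I. \<phi> (a$i) * m i k (a$i))" for a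
    by (simp add: gfun_def sum_distrib_left algebra_simps)
  have s1: "integrable (F i) (\<lambda>a. \<Sum>k\<in>?I. \<phi> (a$i) * a$k)"
    using intc by (rule Bochner_Integration.integrable_sum[where f="\<lambda>k a. \<phi> (a$i) * a$k"])
  have s2: "integrable (F i) (\<lambda>a. \<Sum>k\<in>?I. \<phi> (a$i) * m i k (a$i))"
    using intm by (rule Bochner_Integration.integrable_sum[where f="\<lambda>k a. \<phi> (a$i) * m i k (a$i)"])
  show "integrable (F i) (\<lambda>a. gfun m i (a$i) * \<phi> (a$i))"
    unfolding e2 using intc[of i] s2 by (rule Bochner_Integration.integrable_diff)
  have "(\<integral>a. hh i a * \<phi> (a$i) \<partial>F i) = (\<integral>a. \<phi> (a$i) * a$i \<partial>F i) - (\<integral>a. (\<Sum>k\<in>?I. \<phi> (a$i) * a$k) \<partial>F i)"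
    unfolding e1 by (rule Bochner_Integration.integral_diff[OF intc s1])
  also have "(\<integral>a. (\<Sum>k\<in>?I. \<phi> (a$i) * a$k) \<partial>F i) = (\<Sum>k\<in>?I. \<integral>a. \<phi> (a$i) * a$k \<partial>F i)"
    using intc by (rule Bochner_Integration.integral_sum[where f="\<lambda>k a. \<phi> (a$i) * a$k"])
  also have "\<dots> = (\<Sum>k\<in>?I. \<integral>a. \<phi> (a$i) * m i k (a$i) \<partial>F i)"
    by (rule sum.cong[OF refl]) (use cond_ext(2) bd in auto)
  also have "\<dots> = (\<integral>a. (\<Sum>k\<in>?I. \<phi> (a$i) * m i k (a$i)) \<partial>F i)"
    using intm by (rule Bochner_Integration.integral_sum[where f="\<lambda>k a. \<phi> (a$i) * m i k (a$i)", symmetric])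
  also have "(\<integral>a. \<phi> (a$i) * a$i \<partial>F i) - \<dots> = (\<integral>a. gfun m i (a$i) * \<phi> (a$i) \<partial>F i)"
    unfolding e2 by (rule Bochner_Integration.integral_diff[OF intc s2, symmetric])
  finally show "(\<integral>a. hh i a * \<phi> (a$i) \<partial>F i) = (\<integral>a. gfun m i (a$i) * \<phi> (a$i) \<partial>F i)" .
qed

context
  fixes x' p' :: "'n mech" and i :: 'n
  assumes mech: "is_mechanism x' p'" and reg: "regular_mech F x' p'"
begin

abbreviation "PP \<equiv> PiM (UNIV - {i}) F"

definition XX :: "real^'n \<Rightarrow> real" where
  "XX a = (\<integral>s. x' (bprof i (Some a) s) i \<partial>PP)"

lemma x_meas: "(\<lambda>s. x' (bprof i b s) j) \<in> borel_measurable PP"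
  using reg by (simp add: regular_mech_def)

lemma x01: "0 \<le> x' b j" "x' b j \<le> 1"
  using mech by (auto simp: is_mechanism_def)

lemma x_int: "integrable PP (\<lambda>s. x' (bprof i b s) j)"
  by (rule bounded_integrable[OF prob_Pi x_meas, where B=1]) (use x01 in auto)

lemma XX01: "0 \<le> XX a" "XX a \<le> 1"
proof -
  interpret P: prob_space PP by (rule prob_Pi)
  show "0 \<le> XX a" unfolding XX_def by (rule Bochner_Integration.integral_nonneg) (rule x01)
  have "XX a \<le> (\<integral>s. 1 \<partial>PP)" unfolding XX_def
    by (rule Bochner_Integration.integral_mono[OF x_int]) (auto intro: x01)
  then show "XX a \<le> 1" by (simp add: P.prob_space)
qed

lemma upd_meas: "(\<lambda>x. (snd x)(i := fst x)) \<in> measurable (F i \<Otimes>\<^sub>M PP) (PiM UNIV F)"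
  by (rule measurable_fun_upd[where J="UNIV-{i}"]) auto

lemma bprof_upd: "bprof i (Some a) s = (\<lambda>j. Some ((s(i := a)) j))"
  by (auto simp: bprof_def fun_eq_iff)

lemma XX_meas[measurable]: "XX \<in> borel_measurable (F i)"
proof -
  interpret P: prob_space PP by (rule prob_Pi)
  have G: "(\<lambda>t. x' (\<lambda>j. Some (t j)) i) \<in> borel_measurable (PiM UNIV F)"
    using reg by (simp add: regular_mech_def)
  have "(\<lambda>x. x' (\<lambda>j. Some (((snd x)(i := fst x)) j)) i) \<in> borel_measurable (F i \<Otimes>\<^sub>M PP)"
    using measurable_comp[OF upd_meas G] by (simp add: comp_def)
  then have "case_prod (\<lambda>a s. x' (bprof i (Some a) s) i) \<in> borel_measurable (F i \<Otimes>\<^sub>M PP)"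
    by (simp add: bprof_upd case_prod_beta)
  then show ?thesis unfolding XX_def
    by (rule P.borel_measurable_lebesgue_integral)
qed

lemma comp_coord_meas: "j \<in> UNIV - {i} \<Longrightarrow> (\<lambda>s. s j $ k) \<in> borel_measurable PP"
proof -
  assume j: "j \<in> UNIV - {i}"
  have "(\<lambda>a::real^'n. a $ k) \<in> borel_measurable (F j)" by measurable
  from measurable_comp[OF measurable_component_singleton[OF j, of F] this] show ?thesis
    by (simp add: comp_def)
qed

definition QQ :: "real^'n \<Rightarrow> real" where
  "QQ b = (\<integral>s. - (\<Sum>j\<in>UNIV-{i}. s j $ i * x' (bprof i (Some b) s) j) - p' (bprof i (Some b) s) i \<partial>PP)"

lemma interim_decomp: "interim F x' p' i (Some b) a = a$i * XX b + QQ b"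
proof -
  let ?x = "\<lambda>s j. x' (bprof i (Some b) s) j"
  let ?R = "\<lambda>s. - (\<Sum>j\<in>UNIV-{i}. s j $ i * ?x s j) - p' (bprof i (Some b) s) i"
  have eq: "util i (x' (bprof i (Some b) s)) (p' (bprof i (Some b) s)) (tprof i a s) = a$i * ?x s i + ?R s" for s
  proof -
    have "(\<Sum>j\<in>UNIV-{i}. tprof i a s j $ i * ?x s j) = (\<Sum>j\<in>UNIV-{i}. s j $ i * ?x s j)"
      by (rule sum.cong) (auto simp: tprof_def)
    then show ?thesis by (simp add: util_def tprof_def)
  qed
  have intj: "integrable PP (\<lambda>s. s j $ i * ?x s j)" if j: "j \<in> UNIV - {i}" for j
  proof (rule bounded_integrable[OF prob_Pi, where B="uv j + ue i j"])
    show "(\<lambda>s. s j $ i * ?x s j) \<in> borel_measurable PP"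
      using comp_coord_meas[OF j, of i] x_meas[of "Some b" j] by measurable
    show "AE s in PP. \<bar>s j $ i * ?x s j\<bar> \<le> uv j + ue i j"
      using comp_AE[OF j support[of j]]
    proof eventually_elim
      case (elim s)
      have "\<bar>s j $ i * ?x s j\<bar> = \<bar>s j $ i\<bar> * \<bar>?x s j\<bar>" by (simp add: abs_mult)
      also have "\<dots> \<le> \<bar>s j $ i\<bar> * 1" using x01 by (intro mult_left_mono) auto
      also have "\<dots> \<le> uv j + ue i j" using coord_bound[OF elim] by simp
      finally show ?case .
    qed
  qed
  have intp: "integrable PP (\<lambda>s. p' (bprof i (Some b) s) i)" using reg by (simp add: regular_mech_def)
  have intR: "integrable PP ?R"
    using intj intp by (intro Bochner_Integration.integrable_diff Bochner_Integration.integrable_minus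
        Bochner_Integration.integrable_sum) auto
  have intx: "integrable PP (\<lambda>s. a$i * ?x s i)" using x_int by simp
  have "interim F x' p' i (Some b) a = (\<integral>s. a$i * ?x s i + ?R s \<partial>PP)"
    unfolding interim_def eq ..
  also have "\<dots> = (\<integral>s. a$i * ?x s i \<partial>PP) + (\<integral>s. ?R s \<partial>PP)"
    by (rule Bochner_Integration.integral_add[OF intx intR])
  also have "\<dots> = a$i * XX b + QQ b" by (simp add: XX_def QQ_def)
  finally show ?thesis .
qed

lemma XX_mono:
  assumes bnic: "BNIC F T x' p'" and a: "a \<in> T i" and b: "b \<in> T i" and ab: "a$i < b$i"
  shows "XX a \<le> XX b"
proof (rule ccontr)
  assume "\<not> XX a \<le> XX b"
  then have "0 < (b$i - a$i) * (XX a - XX b)" using ab by (intro mult_pos_pos) auto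
  moreover have "interim F x' p' i (Some a) b \<le> interim F x' p' i (Some b) b"
    using bnic a b by (auto simp: BNIC_def)
  moreover have "interim F x' p' i (Some b) a \<le> interim F x' p' i (Some a) a"
    using bnic a b by (auto simp: BNIC_def)
  ultimately show False by (simp add: interim_decomp algebra_simps)
qed

lemma lhs_int: "integrable (PiM UNIV F) (\<lambda>t. hh i (t i) * x' (\<lambda>j. Some (t j)) i)"
proof (rule bounded_integrable[OF prob_Pi, where B="\<Sum>k\<in>UNIV. uv i + ue k i"])
  have G: "(\<lambda>t. x' (\<lambda>j. Some (t j)) i) \<in> borel_measurable (PiM UNIV F)"
    using reg by (simp add: regular_mech_def)
  have H: "(\<lambda>t. hh i (t i)) \<in> borel_measurable (PiM UNIV F)"
    using measurable_comp[OF measurable_component_singleton[of i UNIV F], of "hh i" borel]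
    by (simp add: comp_def)
  show "(\<lambda>t. hh i (t i) * x' (\<lambda>j. Some (t j)) i) \<in> borel_measurable (PiM UNIV F)"
    using G H by measurable
  show "AE t in PiM UNIV F. \<bar>hh i (t i) * x' (\<lambda>j. Some (t j)) i\<bar> \<le> (\<Sum>k\<in>UNIV. uv i + ue k i)"
  proof -
  have "AE t in PiM UNIV F. t i \<in> T i" by (rule comp_AE) (auto intro: support)
  then show ?thesis
  proof eventually_elim
    case (elim t)
    have "\<bar>hh i (t i) * x' (\<lambda>j. Some (t j)) i\<bar> = \<bar>hh i (t i)\<bar> * \<bar>x' (\<lambda>j. Some (t j)) i\<bar>"
      by (simp add: abs_mult)
    also have "\<dots> \<le> \<bar>hh i (t i)\<bar> * 1" using x01 by (intro mult_left_mono) auto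
    also have "\<dots> \<le> (\<Sum>k\<in>UNIV. uv i + ue k i)" using hh_bound[OF elim] by simp
    finally show ?case .
  qed
  qed
qed

lemma lhs_eq: "(\<integral>t. hh i (t i) * x' (\<lambda>j. Some (t j)) i \<partial>PiM UNIV F) = (\<integral>a. hh i a * XX a \<partial>F i)"
proof -
  interpret PS: product_sigma_finite F
    by (simp add: product_sigma_finite_def prob_space_imp_sigma_finite[OF prob])
  have U: "{i} \<union> (UNIV - {i}) = UNIV" by auto
  let ?f = "\<lambda>t. hh i (t i) * x' (\<lambda>j. Some (t j)) i"
  have "(\<integral>t. ?f t \<partial>PiM UNIV F) = (\<integral>x. (\<integral>y. ?f (merge {i} (UNIV - {i}) (x, y)) \<partial>PP) \<partial>PiM {i} F)"
    using PS.product_integral_fold[of "{i}" "UNIV - {i}" ?f] lhs_int by (simp add: U)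
  also have "\<dots> = (\<integral>x. hh i (x i) * XX (x i) \<partial>PiM {i} F)"
  proof (rule Bochner_Integration.integral_cong[OF refl])
    fix x :: "'n \<Rightarrow> real^'n"
    have m: "merge {i} (UNIV - {i}) (x, y) = y(i := x i)" for y
      by (auto simp: merge_def fun_eq_iff)
    have "(\<integral>y. ?f (merge {i} (UNIV - {i}) (x, y)) \<partial>PP) = (\<integral>y. hh i (x i) * x' (bprof i (Some (x i)) y) i \<partial>PP)"
      by (simp add: m bprof_upd)
    also have "\<dots> = hh i (x i) * XX (x i)" by (simp add: XX_def)
    finally show "(\<integral>y. ?f (merge {i} (UNIV - {i}) (x, y)) \<partial>PP) = hh i (x i) * XX (x i)" .
  qed
  also have "\<dots> = (\<integral>a. hh i a * XX a \<partial>F i)"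
    by (rule PS.product_integral_singleton) measurable
  finally show ?thesis .
qed

lemma part_b_i:
  assumes bnic: "BNIC F T x' p'" and dens: "\<exists>f. distributed (F i) lborel (\<lambda>t. t$i) f"
  shows "(\<integral>a. hh i a * XX a \<partial>F i) \<le> (\<integral>a. hh i a * gi m i (a$i) \<partial>F i)"
proof -
  obtain f where f: "distributed (F i) lborel (\<lambda>t. t$i) f" using dens by blast
  have mono: "\<And>a b. a \<in> T i \<Longrightarrow> b \<in> T i \<Longrightarrow> a$i < b$i \<Longrightarrow> XX a \<le> XX b"
    by (rule XX_mono[OF bnic])
  obtain \<phi> where phm[measurable]: "\<phi> \<in> borel_measurable borel" and ph01: "\<forall>v. 0 \<le> \<phi> v \<and> \<phi> v \<le> 1"
    and ae: "AE a in F i. XX a = \<phi> (a$i)"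
    using ae_mono_fun[where X=XX, OF f XX01(1) XX01(2) mono] by blast
  have bd: "\<bar>\<phi> v\<bar> \<le> 1" for v using ph01 by (simp add: abs_le_iff)
  have "(\<integral>a. hh i a * XX a \<partial>F i) = (\<integral>a. hh i a * \<phi> (a$i) \<partial>F i)"
    by (rule integral_cong_AE) (use ae in \<open>auto elim: eventually_mono\<close>)
  also have "\<dots> = (\<integral>a. gfun m i (a$i) * \<phi> (a$i) \<partial>F i)" by (rule h_phi(2)[OF phm bd])
  also have "\<dots> \<le> (\<integral>a. gfun m i (a$i) * gi m i (a$i) \<partial>F i)"
  proof (rule Bochner_Integration.integral_mono)
    show "integrable (F i) (\<lambda>a. gfun m i (a$i) * \<phi> (a$i))" by (rule h_phi(1)[OF phm bd])
    show "integrable (F i) (\<lambda>a. gfun m i (a$i) * gi m i (a$i))" by (rule h_phi(1)[OF gi_meas gi_bound])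
    fix a
    show "gfun m i (a$i) * \<phi> (a$i) \<le> gfun m i (a$i) * gi m i (a$i)"
    proof (cases "0 \<le> gfun m i (a$i)")
      case True
      then show ?thesis using ph01 mult_left_mono[of "\<phi> (a$i)" 1 "gfun m i (a$i)"] by (simp add: gi_def)
    next
      case False
      then show ?thesis using ph01 mult_nonpos_nonneg[of "gfun m i (a$i)" "\<phi> (a$i)"] by (simp add: gi_def)
    qed
  qed
  also have "\<dots> = (\<integral>a. hh i a * gi m i (a$i) \<partial>F i)" by (rule h_phi(2)[OF gi_meas gi_bound, symmetric])
  finally show ?thesis .
qed

end

lemma rhs_int: "integrable (F i) (\<lambda>a. hh i a * gi m i (a$i))"
proof (rule bounded_integrable[OF prob, where B="\<Sum>k\<in>UNIV. uv i + ue k i"])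
  show "(\<lambda>a. hh i a * gi m i (a$i)) \<in> borel_measurable (F i)" by measurable
  show "AE a in F i. \<bar>hh i a * gi m i (a$i)\<bar> \<le> (\<Sum>k\<in>UNIV. uv i + ue k i)"
    using support[of i]
  proof eventually_elim
    case (elim a)
    have "\<bar>hh i a * gi m i (a$i)\<bar> \<le> \<bar>hh i a\<bar>" by (simp add: gi_def)
    then show ?case using hh_bound[OF elim] by simp
  qed
qed

lemma xopt_some: "xopt m (\<lambda>j. Some (t j)) i = gi m i (t i $ i)"
  by (simp add: xopt_def gi_def)

lemma rhs_eq: "(\<integral>t. hh i (t i) * xopt m (\<lambda>j. Some (t j)) i \<partial>PiM UNIV F) = (\<integral>a. hh i a * gi m i (a$i) \<partial>F i)"
  "integrable (PiM UNIV F) (\<lambda>t. hh i (t i) * xopt m (\<lambda>j. Some (t j)) i)"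
proof -
  have m: "(\<lambda>a. hh i a * gi m i (a$i)) \<in> borel_measurable borel" by measurable
  show "(\<integral>t. hh i (t i) * xopt m (\<lambda>j. Some (t j)) i \<partial>PiM UNIV F) = (\<integral>a. hh i a * gi m i (a$i) \<partial>F i)"
    unfolding xopt_some using comp_int[where I=UNIV and j=i, OF _ m] by simp
  show "integrable (PiM UNIV F) (\<lambda>t. hh i (t i) * xopt m (\<lambda>j. Some (t j)) i)"
    unfolding xopt_some using comp_integrable[where I=UNIV and j=i, OF _ rhs_int] by simp
qed

lemma SW_eq: "SW z t = (\<Sum>i\<in>UNIV. hh i (t i) * z i)"
  by (simp add: SW_def hh_def)

lemma part_b:
  assumes dens: "\<And>i. \<exists>f. distributed (F i) lborel (\<lambda>t. t$i) f"
    and mech: "is_mechanism x' p'" and reg: "regular_mech F x' p'" and bnic: "BNIC F T x' p'"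
  shows "(\<integral>t. SW (x' (\<lambda>j. Some (t j))) t \<partial>(PiM UNIV F))
              \<le> (\<integral>t. SW (xopt m (\<lambda>j. Some (t j))) t \<partial>(PiM UNIV F))"
proof -
  have "(\<integral>t. SW (x' (\<lambda>j. Some (t j))) t \<partial>(PiM UNIV F)) = (\<Sum>i\<in>UNIV. \<integral>t. hh i (t i) * x' (\<lambda>j. Some (t j)) i \<partial>PiM UNIV F)"
    unfolding SW_eq
    by (rule Bochner_Integration.integral_sum[where f="\<lambda>i t. hh i (t i) * x' (\<lambda>j. Some (t j)) i"])
       (rule lhs_int[OF mech reg])
  also have "\<dots> = (\<Sum>i\<in>UNIV. \<integral>a. hh i a * XX x' i a \<partial>F i)"
    by (rule sum.cong[OF refl]) (rule lhs_eq[OF mech reg])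
  also have "\<dots> \<le> (\<Sum>i\<in>UNIV. \<integral>a. hh i a * gi m i (a$i) \<partial>F i)"
    by (rule sum_mono) (rule part_b_i[OF mech reg bnic dens])
  also have "\<dots> = (\<Sum>i\<in>UNIV. \<integral>t. hh i (t i) * xopt m (\<lambda>j. Some (t j)) i \<partial>PiM UNIV F)"
    by (rule sum.cong[OF refl]) (rule rhs_eq(1)[symmetric])
  also have "\<dots> = (\<integral>t. SW (xopt m (\<lambda>j. Some (t j))) t \<partial>(PiM UNIV F))"
    unfolding SW_eq
    by (rule Bochner_Integration.integral_sum[where f="\<lambda>i t. hh i (t i) * xopt m (\<lambda>j. Some (t j)) i", symmetric])
       (rule rhs_eq(2))
  finally show ?thesis .
qed

end


theorem mainTheorem4:
  fixes F :: "'n::finite \<Rightarrow> (real ^ 'n) measure"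
    and lv uv :: "'n \<Rightarrow> real"
    and le ue :: "'n \<Rightarrow> 'n \<Rightarrow> real"
    and m :: "'n \<Rightarrow> 'n \<Rightarrow> real \<Rightarrow> real"
  assumes bounds_v: "\<And>i. 0 \<le> lv i \<and> lv i \<le> uv i"
    and bounds_eta: "\<And>i j. 0 \<le> le i j \<and> le i j \<le> ue i j"
    and prob: "\<And>i. prob_space (F i)"
    and sets_F: "\<And>i. sets (F i) = sets borel"
    and support: "\<And>i. AE t in F i. t \<in> Tset lv uv le ue i"
    and density: "\<And>i. \<exists>f. distributed (F i) lborel (\<lambda>t. t $ i) f"
    and condexp: "\<And>i j. j \<noteq> i \<Longrightarrow> cond_exp_version (F i) i j (m i j)"
    and mono_g: "\<And>i. mono_on {lv i..uv i} (gfun m i)"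
  shows "(\<forall>C. (\<forall>i. cempty F m i \<le> C i) \<longrightarrow>
            BNIC F (Tset lv uv le ue) (xopt m) (popt F m lv uv C) \<and>
            interimIR F (Tset lv uv le ue) (xopt m) (popt F m lv uv C))
       \<and> (\<forall>t i. (\<forall>j. t j \<in> Tset lv uv le ue j) \<longrightarrow>
            0 \<le> popt F m lv uv (cempty F m) (\<lambda>j. Some (t j)) i)
       \<and> (\<forall>x' p'. is_mechanism x' p' \<longrightarrow> regular_mech F x' p' \<longrightarrow>
            BNIC F (Tset lv uv le ue) x' p' \<longrightarrow>
            (\<integral>t. SW (x' (\<lambda>j. Some (t j))) t \<partial>(PiM UNIV F))
              \<le> (\<integral>t. SW (xopt m (\<lambda>j. Some (t j))) t \<partial>(PiM UNIV F)))"
proof -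
  interpret mt F lv uv le ue m
    by (rule mt.intro) (fact bounds_v bounds_eta prob sets_F support condexp)+
  show ?thesis
  proof (intro conjI allI impI)
    fix C assume "\<forall>i. cempty F m i \<le> C i"
    then show "BNIC F (Tset lv uv le ue) (xopt m) (popt F m lv uv C)"
      "interimIR F (Tset lv uv le ue) (xopt m) (popt F m lv uv C)"
      using part_a[OF mono_g] by auto
  next
    fix t i assume "\<forall>j. t j \<in> Tset lv uv le ue j"
    then show "0 \<le> popt F m lv uv (cempty F m) (\<lambda>j. Some (t j)) i" by (rule pay_nonneg)
  next
    fix x' p' assume "is_mechanism x' p'" "regular_mech F x' p'" "BNIC F (Tset lv uv le ue) x' p'"
    then show "(\<integral>t. SW (x' (\<lambda>j. Some (t j))) t \<partial>(PiM UNIV F))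
              \<le> (\<integral>t. SW (xopt m (\<lambda>j. Some (t j))) t \<partial>(PiM UNIV F))"
      using part_b[OF density] by blast
  qed
qed


end
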